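(* Let $$I_N(t)=\frac12\int_\tau^t Y^N(s)\,D^N(s)\,ds,\qquad D^N(s)=Y^N(s-\tau)-Z^N(s).$$ Then for every $T>\tau$, $\sup_{t\in[\tau,T]}|I_N(t)|\to0$ in probability as $N\to\infty$.
   Context: Model. Fix $\tau>0$, $\mu\ge 0$, $N\in\mathbb N$, and write $L=\lfloor \tau N\rfloor$. The state space is $\Omega_N=[0,\infty)^{L+1}$, with elements $x=(x_{-L},\dots,x_0)$. Define $\theta_N^\pm:\Omega_N\to\Omega_N$ by $(\theta_N^\pm x)_j=x_{j+1}$ for $-L\le j<0$, $(\theta_N^+x)_0=x_0(1+\frac1N)$, $(\theta_N^-x)_0=\max\{x_0(1-\frac{x_{-L}}{N^2}),0\}$. Let $\xi^N=(\xi^N(n))_{n\ge0}$ be the discrete-time Markov chain on $\Omega_N$ moving from $x$ to $\theta_N^+x$ or $\theta_N^-x$ with probability $1/2$ each, with $\xi^N_j(0)=\mu N$ for all $j$. Let $(\sigma_n)_{n\ge1}$ be i.i.d. Exp(1), independent of $\xi^N$, $J_0=0$, $J_n=\sigma_1+\dots+\sigma_n$, and $X^N(t)=\xi^N(n)$ for $t\in[J_n,J_{n+1})$. Define $Y^N(t)=X^N_{-L}(N(t+\tau))/N$ for $t\in[-\tau,0)$, $Y^N(t)=X^N_0(Nt)/N$ for $t\ge0$, and $Z^N(t)=X^N_{-L}(Nt)/N$ for $t\ge0$. *)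

theory Defs
  imports "HOL-Probability.Probability"
begin

text \<open>States x = (x_{-L},...,x_0) are represented as functions int => real;
  only the indices -L..0 are meaningful.\<close>

definition Lof :: "real \<Rightarrow> nat \<Rightarrow> nat" where
  "Lof tau N = nat \<lfloor>tau * real N\<rfloor>"

definition theta_plus :: "nat \<Rightarrow> (int \<Rightarrow> real) \<Rightarrow> (int \<Rightarrow> real)" where
  "theta_plus N x = (\<lambda>j. if j < 0 then x (j + 1) else x 0 * (1 + 1 / real N))"

definition theta_minus :: "nat \<Rightarrow> nat \<Rightarrow> (int \<Rightarrow> real) \<Rightarrow> (int \<Rightarrow> real)" where
  "theta_minus N L x = (\<lambda>j. if j < 0 then x (j + 1)
      else max (x 0 * (1 - x (- int L) / (real N)^2)) 0)"

fun chain :: "real \<Rightarrow> real \<Rightarrow> nat \<Rightarrow> (nat \<Rightarrow> bool) \<Rightarrow> nat \<Rightarrow> (int \<Rightarrow> real)" where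
  "chain tau mu N c 0 = (\<lambda>j. mu * real N)"
| "chain tau mu N c (Suc n) = (if c n then theta_plus N (chain tau mu N c n)
      else theta_minus N (Lof tau N) (chain tau mu N c n))"

text \<open>Jump times: J n = sigma_1 + ... + sigma_n, where sigma_{i+1} is stored as s i.\<close>
definition jump_time :: "(nat \<Rightarrow> real) \<Rightarrow> nat \<Rightarrow> real" where
  "jump_time s n = (\<Sum>i<n. s i)"

text \<open>Number of jumps up to time t: the n with J n <= t < J (n+1).\<close>
definition jump_count :: "(nat \<Rightarrow> real) \<Rightarrow> real \<Rightarrow> nat" where
  "jump_count s t = card {n. 1 \<le> n \<and> jump_time s n \<le> t}"

definition Xproc :: "real \<Rightarrow> real \<Rightarrow> nat \<Rightarrow> (nat \<Rightarrow> bool) \<Rightarrow> (nat \<Rightarrow> real) \<Rightarrow> real \<Rightarrow> (int \<Rightarrow> real)" where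
  "Xproc tau mu N c s t = chain tau mu N c (jump_count s t)"

definition Yproc :: "real \<Rightarrow> real \<Rightarrow> nat \<Rightarrow> (nat \<Rightarrow> bool) \<Rightarrow> (nat \<Rightarrow> real) \<Rightarrow> real \<Rightarrow> real" where
  "Yproc tau mu N c s t =
     (if t < 0 then Xproc tau mu N c s (real N * (t + tau)) (- int (Lof tau N)) / real N
      else Xproc tau mu N c s (real N * t) 0 / real N)"

definition Zproc :: "real \<Rightarrow> real \<Rightarrow> nat \<Rightarrow> (nat \<Rightarrow> bool) \<Rightarrow> (nat \<Rightarrow> real) \<Rightarrow> real \<Rightarrow> real" where
  "Zproc tau mu N c s t = Xproc tau mu N c s (real N * t) (- int (Lof tau N)) / real N"

definition Dproc :: "real \<Rightarrow> real \<Rightarrow> nat \<Rightarrow> (nat \<Rightarrow> bool) \<Rightarrow> (nat \<Rightarrow> real) \<Rightarrow> real \<Rightarrow> real" where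
  "Dproc tau mu N c s t = Yproc tau mu N c s (t - tau) - Zproc tau mu N c s t"

definition Iproc :: "real \<Rightarrow> real \<Rightarrow> nat \<Rightarrow> (nat \<Rightarrow> bool) \<Rightarrow> (nat \<Rightarrow> real) \<Rightarrow> real \<Rightarrow> real" where
  "Iproc tau mu N c s t = 1/2 * integral {tau..t} (\<lambda>u. Yproc tau mu N c s u * Dproc tau mu N c s u)"

end

theory Submission
  imports Defs
begin

lemma chain_nonneg: "mu \<ge> 0 \<Longrightarrow> chain tau mu N c n j \<ge> 0"
proof (induction n arbitrary: j)
  case 0 then show ?case by simp
next
  case (Suc n) then show ?case
    by (auto simp: theta_plus_def theta_minus_def)
qed

lemma chain_bound: "mu \<ge> 0 \<Longrightarrow> N \<ge> 1 \<Longrightarrow> chain tau mu N c n j \<le> mu * real N * (1 + 1/real N)^n"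
proof (induction n arbitrary: j)
  case 0 then show ?case by simp
next
  case (Suc n)
  have p: "(1 + 1/real N)^n \<le> (1 + 1/real N)^Suc n" by (intro power_increasing) auto
  have ge: "mu * real N * (1 + 1/real N)^n \<le> mu * real N * (1 + 1/real N)^Suc n"
    using Suc.prems p by (intro mult_left_mono) auto
  have x0: "chain tau mu N c n 0 \<ge> 0" "chain tau mu N c n (- int (Lof tau N)) \<ge> 0"
    using chain_nonneg Suc.prems by auto
  have a: "chain tau mu N c n 0 * (1 + 1 / real N) \<le> mu * real N * (1 + 1/real N)^Suc n"
  proof -
    have "chain tau mu N c n 0 * (1 + 1 / real N) \<le> (mu * real N * (1 + 1/real N)^n) * (1 + 1 / real N)"
      by (rule mult_right_mono[OF Suc.IH]) (use Suc.prems in auto)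
    also have "\<dots> = mu * real N * (1 + 1/real N)^Suc n" by (simp only: power_Suc mult_ac)
    finally show ?thesis .
  qed
  have b: "max (chain tau mu N c n 0 * (1 - chain tau mu N c n (- int (Lof tau N)) / (real N)^2)) 0
      \<le> chain tau mu N c n 0"
    using x0 by (auto simp: algebra_simps mult_nonneg_nonneg divide_nonneg_nonneg)
  have ih: "\<And>j. chain tau mu N c n j \<le> mu * real N * (1 + 1/real N)^n"
    using Suc.IH Suc.prems by blast
  have nn: "0 \<le> mu * real N * (1 + 1/real N)^Suc n" using Suc.prems by simp
  show ?case
  proof (cases "j < 0")
    case True then show ?thesis using ih[of "j+1"] ge by (auto simp: theta_plus_def theta_minus_def)
  next
    case False then show ?thesis using ih[of 0] ge a b nn
      by (auto simp: theta_plus_def theta_minus_def simp del: power_Suc)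
  qed
qed

lemma chain_shift: "chain tau mu N c n (- int d) = chain tau mu N c (n - d) 0"
proof (induction n arbitrary: d)
  case 0 then show ?case by simp
next
  case (Suc n)
  show ?case
  proof (cases d)
    case 0 then show ?thesis by simp
  next
    case (Suc d')
    have "chain tau mu N c (Suc n) (- int d) = chain tau mu N c n (- int d')"
      using Suc by (auto simp: theta_plus_def theta_minus_def)
    also have "\<dots> = chain tau mu N c (n - d') 0" by (rule Suc.IH)
    finally show ?thesis using Suc by simp
  qed
qed

lemma chain_step: "mu \<ge> 0 \<Longrightarrow>
  \<bar>chain tau mu N c (Suc n) 0 - chain tau mu N c n 0\<bar>
   \<le> chain tau mu N c n 0 / real N + chain tau mu N c n 0 * chain tau mu N c n (- int (Lof tau N)) / (real N)^2"
proof -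
  assume mu: "mu \<ge> 0"
  define x where "x = chain tau mu N c n 0"
  define a where "a = chain tau mu N c n (- int (Lof tau N))"
  have x0: "x \<ge> 0" "a \<ge> 0" using chain_nonneg[OF mu] by (auto simp: x_def a_def)
  have q: "x * a / (real N)^2 \<ge> 0" using x0 by simp
  have r: "x / real N \<ge> 0" using x0 by simp
  show ?thesis
  proof (cases "c n")
    case True
    then show ?thesis using q x0 by (simp add: theta_plus_def x_def[symmetric] a_def[symmetric] algebra_simps)
  next
    case False
    have "chain tau mu N c (Suc n) 0 = max (x * (1 - a / (real N)^2)) 0"
      using False by (simp add: theta_minus_def x_def a_def)
    moreover have "x * (1 - a / (real N)^2) = x - x * a / (real N)^2" by (simp add: algebra_simps)
    ultimately have "chain tau mu N c (Suc n) 0 = max (x - x * a / (real N)^2) 0" by simp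
    then have lo: "chain tau mu N c (Suc n) 0 \<ge> x - x * a / (real N)^2"
      and hi: "chain tau mu N c (Suc n) 0 \<le> x" using q x0 by auto
    have "\<bar>chain tau mu N c (Suc n) 0 - x\<bar> \<le> x / real N + x * a / (real N)^2"
      using lo hi r unfolding abs_le_iff by linarith
    then show ?thesis by (simp add: x_def a_def)
  qed
qed

lemma lip_steps:
  fixes f :: "nat \<Rightarrow> real"
  assumes "\<And>n. n < K \<Longrightarrow> \<bar>f (Suc n) - f n\<bar> \<le> C"
  shows "p \<le> K \<Longrightarrow> q \<le> K \<Longrightarrow> \<bar>f p - f q\<bar> \<le> \<bar>real p - real q\<bar> * C"
proof -
  have main: "p \<le> q \<Longrightarrow> q \<le> K \<Longrightarrow> \<bar>f q - f p\<bar> \<le> (real q - real p) * C" for p q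
  proof (induction q)
    case 0 then show ?case by simp
  next
    case (Suc q)
    show ?case
    proof (cases "p = Suc q")
      case True then show ?thesis by simp
    next
      case False
      then have "p \<le> q" using Suc by simp
      then have "\<bar>f q - f p\<bar> \<le> (real q - real p) * C" using Suc by simp
      moreover have "\<bar>f (Suc q) - f q\<bar> \<le> C" using assms Suc by simp
      ultimately show ?thesis by (simp add: algebra_simps)
    qed
  qed
  assume "p \<le> K" "q \<le> K"
  then show ?thesis
    using main[of p q] main[of q p] by (cases "p \<le> q") (auto simp: abs_minus_commute)
qed


lemma jt_mono: "(\<And>i. s i \<ge> 0) \<Longrightarrow> m \<le> n \<Longrightarrow> jump_time s m \<le> jump_time s n"
  unfolding jump_time_def by (rule sum_mono2) auto

lemma jt_nonneg: "(\<And>i. s i \<ge> 0) \<Longrightarrow> jump_time s n \<ge> 0"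
  unfolding jump_time_def by (rule sum_nonneg) auto

lemma count_upper:
  assumes s: "\<And>i. s i \<ge> 0" and K: "jump_time s K > t" "K \<ge> 1"
  shows "finite {n. 1 \<le> n \<and> jump_time s n \<le> t}" "jump_count s t < K"
proof -
  have sub: "{n. 1 \<le> n \<and> jump_time s n \<le> t} \<subseteq> {1..<K}"
  proof
    fix n assume n: "n \<in> {n. 1 \<le> n \<and> jump_time s n \<le> t}"
    have "n < K"
    proof (rule ccontr)
      assume "\<not> n < K"
      then have "jump_time s K \<le> jump_time s n" using jt_mono[OF s] by simp
      then show False using n K by simp
    qed
    then show "n \<in> {1..<K}" using n by simp
  qed
  show "finite {n. 1 \<le> n \<and> jump_time s n \<le> t}" using sub finite_subset by blast
  have "jump_count s t \<le> card {1..<K}" unfolding jump_count_def by (rule card_mono[OF _ sub]) simp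
  then show "jump_count s t < K" using K by simp
qed

lemma count_lower:
  assumes s: "\<And>i. s i \<ge> 0" and fin: "finite {n. 1 \<le> n \<and> jump_time s n \<le> t}"
    and k: "jump_time s k \<le> t"
  shows "k \<le> jump_count s t"
proof -
  have sub: "{1..k} \<subseteq> {n. 1 \<le> n \<and> jump_time s n \<le> t}"
  proof
    fix n assume n: "n \<in> {1..k}"
    have "jump_time s n \<le> jump_time s k" by (rule jt_mono) (use s n in auto)
    then show "n \<in> {n. 1 \<le> n \<and> jump_time s n \<le> t}" using n k by auto
  qed
  have "card {1..k} \<le> jump_count s t" unfolding jump_count_def by (rule card_mono[OF fin sub])
  then show ?thesis by simp
qed

lemma count_approx:
  fixes h u :: real and m R :: nat
  assumes s: "\<And>i. s i \<ge> 0" and m: "m \<ge> 1" and h: "h \<ge> 0" and u: "u \<ge> 0"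
    and cover: "u + h + m \<le> real R * real m"
    and grid: "\<And>j. 1 \<le> j \<Longrightarrow> j \<le> R \<Longrightarrow> \<bar>jump_time s (j * m) - real (j * m)\<bar> \<le> h"
  shows "\<bar>real (jump_count s u) - u\<bar> \<le> h + m"
proof -
  have mpos: "real m > 0" using m by simp
  define x where "x = (u + h) / real m"
  have x0: "x \<ge> 0" using u h mpos by (simp add: x_def)
  define j where "j = nat \<lfloor>x\<rfloor> + 1"
  have jr: "real j = of_int \<lfloor>x\<rfloor> + 1" using x0 by (simp add: j_def)
  have xm: "x * real m = u + h" using mpos by (simp add: x_def)
  have "x < of_int \<lfloor>x\<rfloor> + 1" by linarith
  then have "x * real m < (of_int \<lfloor>x\<rfloor> + 1) * real m" using mpos by (rule mult_strict_right_mono)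
  then have g1: "real j * real m > u + h" using jr xm by simp
  have "of_int \<lfloor>x\<rfloor> \<le> x" by linarith
  then have "of_int \<lfloor>x\<rfloor> * real m \<le> x * real m" using mpos by (intro mult_right_mono) auto
  then have g2: "real j * real m \<le> u + h + m" using jr xm by (simp add: algebra_simps)
  have jR: "j \<le> R"
  proof -
    have "real j * real m \<le> real R * real m" using g2 cover by linarith
    then have "real j \<le> real R" using mpos by simp
    then show ?thesis by simp
  qed
  have j1: "1 \<le> j" by (simp add: j_def)
  have "jump_time s (j * m) \<ge> real (j * m) - h" using grid[OF j1 jR] by linarith
  then have Jgt: "jump_time s (j * m) > u" using g1 by simp
  have jm1: "j * m \<ge> 1" using j1 m by simp
  note up = count_upper[OF s Jgt jm1]
  have upper: "real (jump_count s u) \<le> u + h + m"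
  proof -
    have "real (jump_count s u) < real (j * m)" using up(2) by (simp only: of_nat_less_iff)
    then show ?thesis using g2 by simp
  qed
  have lower: "real (jump_count s u) \<ge> u - h - m"
  proof (cases "u - h < m")
    case True then show ?thesis by simp
  next
    case False
    define y where "y = (u - h) / real m"
    have y1: "y \<ge> 1" using False mpos by (simp add: y_def field_simps)
    define i where "i = nat \<lfloor>y\<rfloor>"
    have ir: "real i = of_int \<lfloor>y\<rfloor>" using y1 by (simp add: i_def)
    have ym: "y * real m = u - h" using mpos by (simp add: y_def)
    have "of_int \<lfloor>y\<rfloor> \<le> y" by linarith
    then have "of_int \<lfloor>y\<rfloor> * real m \<le> y * real m" using mpos by (intro mult_right_mono) auto
    then have f1: "real i * real m \<le> u - h" using ir ym by simp
    have "y < of_int \<lfloor>y\<rfloor> + 1" by linarith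
    then have "y * real m < (of_int \<lfloor>y\<rfloor> + 1) * real m" using mpos by (rule mult_strict_right_mono)
    then have f2: "real i * real m > u - h - m" using ir ym by (simp add: algebra_simps)
    have i1: "1 \<le> i" using y1 by (simp add: i_def le_nat_iff)
    have iR: "i \<le> R"
    proof -
      have "real i * real m \<le> real R * real m" using f1 cover h mpos by linarith
      then have "real i \<le> real R" using mpos by simp
      then show ?thesis by simp
    qed
    have "jump_time s (i * m) \<le> real (i * m) + h" using grid[OF i1 iR] by linarith
    then have "jump_time s (i * m) \<le> u" using f1 by simp
    then have "i * m \<le> jump_count s u" by (rule count_lower[OF s up(1)])
    then have "real (i * m) \<le> real (jump_count s u)" by linarith
    then show ?thesis using f2 by simp
  qed
  show ?thesis using upper lower by linarith
qed


lemma integral_abs_bound: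
  fixes f :: "real \<Rightarrow> real"
  assumes "a \<le> b" "0 \<le> C" "\<And>x. x \<in> {a..b} \<Longrightarrow> \<bar>f x\<bar> \<le> C"
  shows "\<bar>integral {a..b} f\<bar> \<le> C * (b - a)"
proof (cases "f integrable_on {a..b}")
  case True
  then have "(f has_integral integral {a..b} f) {a..b}" by auto
  then show ?thesis
    using has_integral_bound_real[where S="{}" and B=C and f=f and a=a and b=b] assms by auto
next
  case False then show ?thesis using assms by (simp add: not_integrable_integral)
qed

lemma pow_exp_bound:
  assumes "N \<ge> 1" "real n \<le> real N * a"
  shows "(1 + 1 / real N) ^ n \<le> exp a"
proof -
  have "(1 + 1 / real N) ^ n \<le> exp (1 / real N) ^ n"
    by (rule power_mono) (use assms in auto)
  also have "\<dots> = exp (real n * (1 / real N))" by (rule exp_of_nat_mult[symmetric])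
  also have "\<dots> \<le> exp a" using assms by (simp add: field_simps)
  finally show ?thesis .
qed

lemma nat_le_floor: "real n \<le> y \<Longrightarrow> n \<le> nat \<lfloor>y\<rfloor>"
  by linarith

lemma det_bound:
  fixes tau mu T eta :: real and N m R :: nat
  assumes tau: "tau > 0" and mu: "mu \<ge> 0" and T: "T > tau" and N: "N \<ge> 2"
    and s: "\<And>i. s i \<ge> 0" and m: "m \<ge> 1" "real m \<le> eta * real N + 1"
    and eta: "0 < eta" "eta \<le> 1/4"
    and cover: "real N * T + eta * real N + real m \<le> real R * real m"
    and grid: "\<And>j. 1 \<le> j \<Longrightarrow> j \<le> R \<Longrightarrow> \<bar>jump_time s (j * m) - real (j * m)\<bar> \<le> eta * real N"
    and t: "t \<in> {tau..T}"
  shows "\<bar>Iproc tau mu N c s t\<bar> \<le> (T - tau) / 2 *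
           (mu * exp (T + 1) * ((mu * exp (T + 1) + (mu * exp (T + 1))^2) * (4 * eta + 3 / real N)))"
proof -
  define B where "B = mu * exp (T + 1)"
  define x where "x = (\<lambda>n. chain tau mu N c n 0)"
  define K where "K = nat \<lfloor>real N * (T + 1)\<rfloor>"
  define L where "L = Lof tau N"
  have N1: "N \<ge> 1" and Npos: "real N > 0" using N by auto
  have B0: "B \<ge> 0" using mu by (simp add: B_def)
  have bnd: "chain tau mu N c n j \<le> real N * B" if "n \<le> K" for n j
  proof -
    have y0: "0 \<le> real N * (T + 1)" using T tau by simp
    have "real n \<le> real (nat \<lfloor>real N * (T + 1)\<rfloor>)" using that unfolding K_def by simp
    also have "\<dots> = of_int \<lfloor>real N * (T + 1)\<rfloor>" using y0 by simp
    also have "\<dots> \<le> real N * (T + 1)" by linarith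
    finally have "real n \<le> real N * (T + 1)" .
    then have "(1 + 1 / real N) ^ n \<le> exp (T + 1)" using N1 by (intro pow_exp_bound) auto
    then have "mu * real N * (1 + 1 / real N) ^ n \<le> mu * real N * exp (T + 1)"
      using mu by (intro mult_left_mono) auto
    then show ?thesis using chain_bound[OF mu N1, of tau c n j] by (simp add: B_def mult_ac)
  qed
  have step: "\<bar>x (Suc n) - x n\<bar> \<le> B + B^2" if "n < K" for n
  proof -
    define a where "a = chain tau mu N c n (- int L)"
    have x0: "x n \<ge> 0" "a \<ge> 0" using chain_nonneg[OF mu] by (auto simp: x_def a_def)
    have xb: "x n \<le> real N * B" "a \<le> real N * B" using bnd that by (auto simp: x_def a_def)
    have "x n / real N \<le> B" using xb Npos by (simp add: field_simps)
    moreover have "x n * a \<le> (real N * B) * (real N * B)" using xb x0 by (intro mult_mono) auto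
    then have "x n * a / (real N)^2 \<le> B^2" using Npos by (simp add: field_simps power2_eq_square)
    moreover have "\<bar>x (Suc n) - x n\<bar> \<le> x n / real N + x n * a / (real N)^2"
      using chain_step[OF mu, of tau N c n] by (simp add: x_def a_def L_def)
    ultimately show ?thesis by linarith
  qed
  have lip: "\<bar>x p - x q\<bar> \<le> \<bar>real p - real q\<bar> * (B + B^2)" if "p \<le> K" "q \<le> K" for p q
    using lip_steps[of K x "B + B^2", OF step] that by blast
  have cnt: "\<bar>real (jump_count s u) - u\<bar> \<le> 2 * eta * real N + 1"
    and cntK: "jump_count s u \<le> K" if "0 \<le> u" "u \<le> real N * T" for u
  proof -
    have "\<bar>real (jump_count s u) - u\<bar> \<le> eta * real N + m"
      by (rule count_approx[OF s m(1), where R=R]) (use that eta cover grid Npos in auto)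
    then show c1: "\<bar>real (jump_count s u) - u\<bar> \<le> 2 * eta * real N + 1" using m by simp
    have "eta * real N \<le> real N / 4" using eta Npos by simp
    moreover have "real N \<ge> 2" using N by simp
    moreover have "real N * (T + 1) = real N * T + real N" by (simp add: algebra_simps)
    ultimately have "real (jump_count s u) \<le> real N * (T + 1)" using c1 that unfolding abs_le_iff by linarith
    then show "jump_count s u \<le> K" unfolding K_def by (rule nat_le_floor)
  qed
  have Lb: "real L \<le> tau * real N" "real L > tau * real N - 1"
    using tau Npos by (auto simp: L_def Lof_def)
  have tT: "tau \<le> t" "t \<le> T" using t by auto
  define b where "b = B * ((B + B^2) * (4 * eta + 3 / real N))"
  have pt: "\<bar>Yproc tau mu N c s u * Dproc tau mu N c s u\<bar> \<le> b" if u: "u \<in> {tau..t}" for u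
  proof -
    define n1 where "n1 = jump_count s (real N * (u - tau))"
    define n2 where "n2 = jump_count s (real N * u)"
    have u0: "u \<ge> 0" "u - tau \<ge> 0" "u \<le> T" using u tau tT by auto
    have r1: "0 \<le> real N * (u - tau)" "real N * (u - tau) \<le> real N * T"
      using u0 Npos tau by (auto intro: mult_left_mono)
    have r2: "0 \<le> real N * u" "real N * u \<le> real N * T"
      using u0 Npos by (auto intro: mult_left_mono)
    have c1: "\<bar>real n1 - real N * (u - tau)\<bar> \<le> 2 * eta * real N + 1" "n1 \<le> K"
      using cnt[OF r1] cntK[OF r1] by (auto simp: n1_def)
    have c2: "\<bar>real n2 - real N * u\<bar> \<le> 2 * eta * real N + 1" "n2 \<le> K"
      using cnt[OF r2] cntK[OF r2] by (auto simp: n2_def)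
    have Y: "Yproc tau mu N c s u = x n2 / real N"
      using u0 by (simp add: Yproc_def Xproc_def x_def n2_def)
    have Y1: "Yproc tau mu N c s (u - tau) = x n1 / real N"
      using u0 by (simp add: Yproc_def Xproc_def x_def n1_def)
    have Z: "Zproc tau mu N c s u = x (n2 - L) / real N"
      by (simp add: Zproc_def Xproc_def x_def n2_def chain_shift L_def)
    have D: "Dproc tau mu N c s u = (x n1 - x (n2 - L)) / real N"
      by (simp add: Dproc_def Y1 Z diff_divide_distrib)
    have idx: "\<bar>real n1 - real (n2 - L)\<bar> \<le> 4 * eta * real N + 3"
    proof -
      have e: "real N * (u - tau) = real N * u - tau * real N" by (simp add: algebra_simps)
      show ?thesis
      proof (cases "L \<le> n2")
        case True
        then have "real (n2 - L) = real n2 - real L" by simp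
        then show ?thesis using c1(1) c2(1) Lb e unfolding abs_le_iff by linarith
      next
        case False
        then have "real (n2 - L) = 0" "real n2 < real L" by simp_all
        then show ?thesis using c1(1) c2(1) Lb e unfolding abs_le_iff by linarith
      qed
    qed
    have "\<bar>x n1 - x (n2 - L)\<bar> \<le> \<bar>real n1 - real (n2 - L)\<bar> * (B + B^2)"
      using c1 c2 by (intro lip) auto
    also have "\<dots> \<le> (4 * eta * real N + 3) * (B + B^2)"
      using idx B0 by (intro mult_right_mono) auto
    finally have dx: "\<bar>x n1 - x (n2 - L)\<bar> \<le> (4 * eta * real N + 3) * (B + B^2)" .
    have "\<bar>Dproc tau mu N c s u\<bar> \<le> (4 * eta * real N + 3) * (B + B^2) / real N"
      using dx Npos by (simp add: D divide_right_mono)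
    also have "\<dots> = (B + B^2) * (4 * eta + 3 / real N)" using Npos by (simp add: field_simps)
    finally have dD: "\<bar>Dproc tau mu N c s u\<bar> \<le> (B + B^2) * (4 * eta + 3 / real N)" .
    have "x n2 \<ge> 0" using chain_nonneg[OF mu] by (simp add: x_def)
    moreover have "x n2 \<le> real N * B" using bnd c2 by (simp add: x_def)
    ultimately have dY: "\<bar>Yproc tau mu N c s u\<bar> \<le> B" using Npos by (simp add: Y field_simps)
    show ?thesis unfolding b_def abs_mult
      by (rule mult_mono[OF dY dD]) (use B0 in auto)
  qed
  have b0: "b \<ge> 0" using B0 eta Npos by (simp add: b_def)
  have "\<bar>integral {tau..t} (\<lambda>u. Yproc tau mu N c s u * Dproc tau mu N c s u)\<bar> \<le> b * (t - tau)"
    by (rule integral_abs_bound) (use tT b0 pt in auto)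
  also have "\<dots> \<le> b * (T - tau)" using b0 tT by (intro mult_left_mono) auto
  finally show ?thesis by (simp add: Iproc_def b_def B_def mult.commute)
qed


lemma (in prob_space) J_erlang:
  fixes W :: "nat + nat \<Rightarrow> 'a \<Rightarrow> real"
  assumes indep: "indep_vars (\<lambda>_. borel) W UNIV"
    and expo: "\<And>n. distributed M lborel (W (Inr n)) (exponential_density 1)"
    and k: "k \<ge> 1"
  shows "distributed M lborel (\<lambda>\<omega>. jump_time (\<lambda>n. W (Inr n) \<omega>) k) (erlang_density (k - 1) 1)"
proof -
  have "distributed M lborel (\<lambda>x. \<Sum>i\<in>Inr ` {..<k}. W i x) (erlang_density (card (Inr ` {..<k} :: (nat + nat) set) - 1) 1)"
  proof (rule exponential_distributed_sum)
    have "0 \<in> {..<k}" using k by simp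
    then show "Inr ` {..<k} \<noteq> {}" by blast
  qed (use k expo in \<open>auto intro: indep_vars_subset[OF indep]\<close>)
  moreover have "card (Inr ` {..<k} :: (nat + nat) set) = k" by (simp add: card_image)
  moreover have "(\<lambda>x. \<Sum>i\<in>Inr ` {..<k}. W i x) = (\<lambda>\<omega>. jump_time (\<lambda>n. W (Inr n) \<omega>) k)"
    by (simp add: jump_time_def sum.reindex)
  ultimately show ?thesis by simp
qed

lemma (in prob_space) cheb_J:
  fixes W :: "nat + nat \<Rightarrow> 'a \<Rightarrow> real"
  assumes indep: "indep_vars (\<lambda>_. borel) W UNIV"
    and expo: "\<And>n. distributed M lborel (W (Inr n)) (exponential_density 1)"
    and k: "k \<ge> 1" and a: "a > 0"
  shows "{\<omega>\<in>space M. a \<le> \<bar>jump_time (\<lambda>n. W (Inr n) \<omega>) k - real k\<bar>} \<in> sets M"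
    "prob {\<omega>\<in>space M. a \<le> \<bar>jump_time (\<lambda>n. W (Inr n) \<omega>) k - real k\<bar>} \<le> real k / a^2"
proof -
  define f where "f = (\<lambda>\<omega>. jump_time (\<lambda>n. W (Inr n) \<omega>) k)"
  have D: "distributed M lborel f (erlang_density (k - 1) 1)"
    unfolding f_def by (rule J_erlang[OF indep expo k])
  have fm[measurable]: "f \<in> borel_measurable M"
    using distributed_measurable[OF D] by simp
  have "{\<omega>\<in>space M. a \<le> \<bar>f \<omega> - real k\<bar>} \<in> sets M" by measurable
  then show "{\<omega>\<in>space M. a \<le> \<bar>jump_time (\<lambda>n. W (Inr n) \<omega>) k - real k\<bar>} \<in> sets M"
    by (simp add: f_def)
  have E: "expectation f = real k"
    using erlang_ith_moment[OF _ D, of 1] k by (simp add: fact_reduce)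
  have V: "variance f = real k"
    using erlang_distributed_variance[OF _ D] k by simp
  have I2: "integrable M (\<lambda>x. f x ^ 2)"
    using erlang_ith_moment_integrable[OF _ D, of 2] by simp
  have ch: "prob {x\<in>space M. \<bar>f x - expectation f\<bar> \<ge> a} \<le> variance f / a\<^sup>2"
    by (rule Chebyshev_inequality) (use fm I2 a in auto)
  have V': "expectation (\<lambda>x. (f x - real k)^2) = real k" using V E by simp
  have "prob {x\<in>space M. \<bar>f x - real k\<bar> \<ge> a} \<le> real k / a\<^sup>2"
    using ch unfolding E V' .
  then show "prob {\<omega>\<in>space M. a \<le> \<bar>jump_time (\<lambda>n. W (Inr n) \<omega>) k - real k\<bar>} \<le> real k / a^2"
    by (simp add: f_def)
qed

lemma (in prob_space) nonpos_null:
  fixes W :: "nat + nat \<Rightarrow> 'a \<Rightarrow> real"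
  assumes expo: "\<And>n. distributed M lborel (W (Inr n)) (exponential_density 1)"
  shows "(\<Union>i. {\<omega>\<in>space M. W (Inr i) \<omega> \<le> 0}) \<in> sets M"
    "prob (\<Union>i. {\<omega>\<in>space M. W (Inr i) \<omega> \<le> 0}) = 0"
proof -
  have m[measurable]: "W (Inr i) \<in> borel_measurable M" for i
    using distributed_measurable[OF expo[of i]] by simp
  have s: "{\<omega>\<in>space M. W (Inr i) \<omega> \<le> 0} \<in> sets M" for i by measurable
  then show "(\<Union>i. {\<omega>\<in>space M. W (Inr i) \<omega> \<le> 0}) \<in> sets M" by blast
  have "prob {\<omega>\<in>space M. W (Inr i) \<omega> \<le> 0} = 0" for i
    using exponential_distributedD_le[OF expo[of i], of 0] by simp
  then have "emeasure M {\<omega>\<in>space M. W (Inr i) \<omega> \<le> 0} = 0" for i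
    using s by (simp add: emeasure_eq_measure)
  then have "emeasure M (\<Union>i. {\<omega>\<in>space M. W (Inr i) \<omega> \<le> 0}) = 0"
    by (intro emeasure_UN_eq_0) (use s in auto)
  then show "prob (\<Union>i. {\<omega>\<in>space M. W (Inr i) \<omega> \<le> 0}) = 0"
    by (simp add: measure_def)
qed


theorem proposition3p6:
  fixes M :: "'a measure" and tau mu T :: real
    and V :: "nat \<Rightarrow> nat + nat \<Rightarrow> 'a \<Rightarrow> real"
  assumes "prob_space M"
    and "tau > 0" and "mu \<ge> 0" and "T > tau"
    and indep: "\<And>N. prob_space.indep_vars M (\<lambda>_. borel) (V N) UNIV"
    and coin1: "\<And>N n. measure M {\<omega> \<in> space M. V N (Inl n) \<omega> = 1} = 1/2"
    and coin0: "\<And>N n. measure M {\<omega> \<in> space M. V N (Inl n) \<omega> = 0} = 1/2"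
    and expo: "\<And>N n. distributed M lborel (V N (Inr n)) (exponential_density 1)"
  shows "\<forall>\<epsilon>>0. \<forall>\<delta>>0. \<forall>\<^sub>F N in sequentially.
           \<exists>A \<in> sets M. measure M A < \<delta> \<and>
             {\<omega> \<in> space M. \<exists>t\<in>{tau..T}.
                \<bar>Iproc tau mu N (\<lambda>n. V N (Inl n) \<omega> = 1) (\<lambda>n. V N (Inr n) \<omega>) t\<bar> > \<epsilon>} \<subseteq> A"
proof (intro allI impI)
  interpret P: prob_space M by fact
  fix \<epsilon> \<delta> :: real
  assume ep: "\<epsilon> > 0" and dp: "\<delta> > 0"
  have tau: "tau > 0" and mu: "mu \<ge> 0" and T: "T > tau" by fact+
  define B where "B = mu * exp (T + 1)"
  have B0: "B \<ge> 0" using mu by (simp add: B_def)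
  define C0 where "C0 = (T - tau) / 2 * (B * (B + B^2))"
  have C0: "C0 \<ge> 0" using B0 T by (simp add: C0_def)
  define eta where "eta = min (1/4) (\<epsilon> / (8 * (C0 + 1)))"
  have e1: "eta \<le> 1/4" unfolding eta_def by (rule min.cobounded1)
  have e2: "eta \<le> \<epsilon> / (8 * (C0 + 1))" unfolding eta_def by (rule min.cobounded2)
  have e0: "\<epsilon> / (8 * (C0 + 1)) > 0" using ep C0 by simp
  have "eta > 0" unfolding eta_def using e0 by simp
  note eta = this e1 e2
  define R where "R = nat \<lceil>(T + 2) / eta\<rceil>"
  have R: "real R \<ge> (T + 2) / eta" unfolding R_def by linarith
  define N0 where "N0 = nat \<lceil>max (max 2 (1/eta)) (max (2 * (real R)^2 / (eta * \<delta>)) (6 * C0 / \<epsilon>))\<rceil> + 1"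
  show "\<forall>\<^sub>F N in sequentially.
           \<exists>A \<in> sets M. measure M A < \<delta> \<and>
             {\<omega> \<in> space M. \<exists>t\<in>{tau..T}.
                \<bar>Iproc tau mu N (\<lambda>n. V N (Inl n) \<omega> = 1) (\<lambda>n. V N (Inr n) \<omega>) t\<bar> > \<epsilon>} \<subseteq> A"
    unfolding eventually_sequentially
  proof (intro exI allI impI)
    fix N assume NN0: "N0 \<le> N"
    have "real N0 > max (max 2 (1/eta)) (max (2 * (real R)^2 / (eta * \<delta>)) (6 * C0 / \<epsilon>))"
      unfolding N0_def by linarith
    then have Nb: "real N > 2" "real N > 1/eta" "real N > 2 * (real R)^2 / (eta * \<delta>)" "real N > 6 * C0 / \<epsilon>"
      using NN0 by (auto simp: max_def split: if_splits)
    have N2: "N \<ge> 2" using Nb by simp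
    have Npos: "real N > 0" using Nb by simp
    have etaN: "eta * real N \<ge> 1" using Nb(2) eta by (simp add: field_simps)
    define m where "m = nat \<lceil>eta * real N\<rceil>"
    have mr: "real m \<ge> eta * real N" "real m \<le> eta * real N + 1" unfolding m_def using etaN by linarith+
    have m1: "m \<ge> 1" using mr etaN by simp
    have cover: "real N * T + eta * real N + real m \<le> real R * real m"
    proof -
      have "(T + 2) / eta * (eta * real N) \<le> real R * real m"
        using R mr T tau eta by (intro mult_mono) auto
      then have "(T + 2) * real N \<le> real R * real m" using eta by simp
      then have h1: "real N * T + 2 * real N \<le> real R * real m" by (simp add: algebra_simps)
      have h2: "eta * real N \<le> real N / 4" using eta Npos by simp
      show ?thesis using h1 h2 mr Nb by linarith
    qed
    define W where "W = V N"
    have indW: "P.indep_vars (\<lambda>_. borel) W UNIV" using indep by (simp add: W_def)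
    have expW: "\<And>n. distributed M lborel (W (Inr n)) (exponential_density 1)" using expo by (simp add: W_def)
    define A0 where "A0 = (\<Union>i. {\<omega>\<in>space M. W (Inr i) \<omega> \<le> 0})"
    define F where "F = (\<lambda>j. {\<omega>\<in>space M. eta * real N \<le> \<bar>jump_time (\<lambda>n. W (Inr n) \<omega>) (j * m) - real (j * m)\<bar>})"
    define A1 where "A1 = (\<Union>j\<in>{1..R}. F j)"
    have A0s: "A0 \<in> sets M" and A0m: "measure M A0 = 0"
      using P.nonpos_null[of W, OF expW] by (auto simp: A0_def)
    have Fs: "F j \<in> sets M" and Fm: "measure M (F j) \<le> real (j * m) / (eta * real N)^2" if "j \<ge> 1" for j
    proof -
      have jm: "j * m \<ge> 1" using that m1 by simp
      have a: "eta * real N > 0" using eta Npos by simp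
      show "F j \<in> sets M" "measure M (F j) \<le> real (j * m) / (eta * real N)^2"
        using P.cheb_J[of W, OF indW expW jm a] by (auto simp: F_def)
    qed
    have A1s: "A1 \<in> sets M" unfolding A1_def using Fs by auto
    have "measure M A1 \<le> (\<Sum>j\<in>{1..R}. measure M (F j))"
      unfolding A1_def by (rule P.finite_measure_subadditive_finite) (use Fs in auto)
    also have "\<dots> \<le> (\<Sum>j\<in>{1..R}. real (R * m) / (eta * real N)^2)"
    proof (rule sum_mono)
      fix j assume j: "j \<in> {1..R}"
      have "j * m \<le> R * m" using j by simp
      then have "real (j * m) \<le> real (R * m)" by (simp only: of_nat_le_iff)
      then have "real (j * m) / (eta * real N)^2 \<le> real (R * m) / (eta * real N)^2"
        by (simp add: divide_right_mono)
      then show "measure M (F j) \<le> real (R * m) / (eta * real N)^2" using Fm[of j] j by simp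
    qed
    also have "\<dots> = real R * (real R * real m) / (eta * real N)^2" by simp
    also have "\<dots> \<le> real R * (real R * (2 * (eta * real N))) / (eta * real N)^2"
      using mr etaN by (intro divide_right_mono mult_left_mono) auto
    also have "\<dots> = 2 * (real R)^2 / (eta * real N)"
      using eta Npos by (simp add: field_simps power2_eq_square)
    also have "\<dots> < \<delta>"
    proof -
      have "2 * (real R)^2 / (eta * \<delta>) < real N" by (rule Nb(3))
      then have "2 * (real R)^2 < real N * (eta * \<delta>)" using eta dp by (simp add: field_simps)
      then show ?thesis using eta Npos by (simp add: field_simps)
    qed
    finally have A1m: "measure M A1 < \<delta>" .
    have Am: "measure M (A0 \<union> A1) < \<delta>"
      using measure_Un_le[OF A0s A1s] A0m A1m by linarith
    have bound: "C0 * (4 * eta + 3 / real N) \<le> \<epsilon>"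
    proof -
      have "C0 * (4 * eta) \<le> C0 * (4 * (\<epsilon> / (8 * (C0 + 1))))" using eta C0 by (intro mult_left_mono) auto
      also have "\<dots> = \<epsilon> / 2 * (C0 / (C0 + 1))" using C0 by (simp add: field_simps)
      also have "\<dots> \<le> \<epsilon> / 2" using C0 ep by (simp add: field_simps)
      finally have b1: "C0 * (4 * eta) \<le> \<epsilon> / 2" .
      have "6 * C0 / \<epsilon> < real N" by (rule Nb(4))
      then have "6 * C0 < real N * \<epsilon>" using ep by (simp add: field_simps)
      then have b2: "C0 * (3 / real N) \<le> \<epsilon> / 2" using Npos by (simp add: field_simps)
      have "C0 * (4 * eta + 3 / real N) = C0 * (4 * eta) + C0 * (3 / real N)" by (rule distrib_left)
      then show ?thesis using b1 b2 by linarith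
    qed
    have sub: "{\<omega> \<in> space M. \<exists>t\<in>{tau..T}.
                \<bar>Iproc tau mu N (\<lambda>n. V N (Inl n) \<omega> = 1) (\<lambda>n. V N (Inr n) \<omega>) t\<bar> > \<epsilon>} \<subseteq> A0 \<union> A1"
    proof
      fix \<omega> assume w: "\<omega> \<in> {\<omega> \<in> space M. \<exists>t\<in>{tau..T}.
                \<bar>Iproc tau mu N (\<lambda>n. V N (Inl n) \<omega> = 1) (\<lambda>n. V N (Inr n) \<omega>) t\<bar> > \<epsilon>}"
      then obtain t where t: "t \<in> {tau..T}"
        and big: "\<bar>Iproc tau mu N (\<lambda>n. V N (Inl n) \<omega> = 1) (\<lambda>n. V N (Inr n) \<omega>) t\<bar> > \<epsilon>"
        and ws: "\<omega> \<in> space M" by auto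
      show "\<omega> \<in> A0 \<union> A1"
      proof (rule ccontr)
        assume "\<omega> \<notin> A0 \<union> A1"
        then have nA0: "\<omega> \<notin> A0" and nA1: "\<omega> \<notin> A1" by auto
        have s: "V N (Inr i) \<omega> \<ge> 0" for i
        proof -
          have "\<not> V N (Inr i) \<omega> \<le> 0" using nA0 ws by (auto simp: A0_def W_def)
          then show ?thesis by simp
        qed
        have g: "\<And>j. 1 \<le> j \<Longrightarrow> j \<le> R \<Longrightarrow>
            \<bar>jump_time (\<lambda>n. V N (Inr n) \<omega>) (j * m) - real (j * m)\<bar> \<le> eta * real N"
          using nA1 ws by (force simp: A1_def F_def W_def)
        have "\<bar>Iproc tau mu N (\<lambda>n. V N (Inl n) \<omega> = 1) (\<lambda>n. V N (Inr n) \<omega>) t\<bar> \<le> (T - tau) / 2 *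
           (mu * exp (T + 1) * ((mu * exp (T + 1) + (mu * exp (T + 1))^2) * (4 * eta + 3 / real N)))"
          by (rule det_bound[OF tau mu T N2 s m1 mr(2) eta(1) eta(2) cover g t])
        also have "\<dots> = C0 * (4 * eta + 3 / real N)" by (simp add: C0_def B_def mult_ac)
        finally show False using bound big by linarith
      qed
    qed
    show "\<exists>A \<in> sets M. measure M A < \<delta> \<and>
             {\<omega> \<in> space M. \<exists>t\<in>{tau..T}.
                \<bar>Iproc tau mu N (\<lambda>n. V N (Inl n) \<omega> = 1) (\<lambda>n. V N (Inr n) \<omega>) t\<bar> > \<epsilon>} \<subseteq> A"
      using A0s A1s Am sub by blast
  qed
qed

end
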